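(* Let $\mathcal C$ be a finitely graded flow category in geometric chains. Then the flow complex $CM_*(\mathcal C)=\bigoplus_{X\in\mathsf{Ob}(\mathcal C)}C_*(X)[\widetilde i(X)]\otimes_{\mathbb Z/2}\mathbb Z[\Lambda(X)]$ with differential $d=\partial+d_M$, where $\partial$ is the geometric boundary and $d_M\phi=\sum_{Y}(-1)^{\dim\phi}\,\phi\times_X\mathcal C_{XY}$ for $\phi\in C_*(X)$, is a chain complex (relatively $\mathbb Z/2N$-graded, with $d$ of degree $-1$ and $d^2=0$).
   Context: For a closed smooth manifold $M$, $C_*(M)$ denotes a chain complex of geometric chains (generated by stratified-smooth maps $\phi:P\to M$ from compact oriented stratified-smooth spaces, modulo relations; concentrated in degrees $[0,\dim M]$), with boundary $\partial$, $\partial^2=0$, and reversing orientation of $P$ negating the chain. Given a chain $W\in C_*(M\times N)$ whose projection to $M$ is a submersion and $M$ oriented, there is a fiber product map $\times_M W:C_*(M)\to C_{*+\dim W-\dim M}(N)$, $P\mapsto P\times_M W$, which is associative, negates if the orientation of $M$ or $W$ is negated, and satisfies $\partial(\phi\times_M W)=(\partial\phi)\times_M W+(-1)^{\dim P+\dim M}\phi\times_M(\partial W)$. A finitely graded flow category $\mathcal C$ consists of: a finite set $\mathsf{Ob}(\mathcal C)$ of closed connected orientable smooth manifolds; for each $X$ a two-element set $\Lambda(X)$; a function $\widetilde i:\mathsf{Ob}\times\mathsf{Ob}\to\mathbb Z/2N$ with $\widetilde i(X,Y)+\widetilde i(Y,Z)=\widetilde i(X,Z)$; for each $X,Y$, each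 orientation of $X$ and elements of $\Lambda(X),\Lambda(Y)$, a geometric chain $\mathcal C_{XY}\in C_{\dim X+\widetilde i(X,Y)-1}(X\times Y)$ (degree read mod $2N$) whose map to $X$ is a submersion, whose orientation reverses if any one of these choices is changed; and satisfying $(-1)^{\dim X}\partial\mathcal C_{XY}=\sum_Z(-1)^{\widetilde i(X,Z)}\mathcal C_{XZ}\times_Z\mathcal C_{ZY}$ in $C_*(X\times Y)$. In $CM_*(\mathcal C)$, $\mathbb Z/2$ acts on $C_*(X)$ by orientation reversal and on $\Lambda(X)$ by swapping; the grading shift means a chain $P$ in $X$ and $Q$ in $Y$ have relative grading $\dim P-\dim Q+\widetilde i(X,Y)$. *)

theory Defs
  imports "HOL-Number_Theory.Cong"
begin

text \<open>Abstract (axiomatic) model of geometric Ch.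
  Spaces have type 's, all Ch live in an ambient abelian group 'c.
  Ch s k  = the group C_k(s) of degree-k Ch on the space s (a subgroup of 'c),
  dim s       = dimension of the (closed smooth) manifold s,
  prd X Y   = the product manifold X x Y,
  bd s k      = geometric boundary C_k(s) -> C_(k-1)(s),
  fp M N p q phi W = phi x_M W  for phi in C_p(M), W in C_q(M x N)   (lands in C_(p+q-dim M)(N)),
  fpp X Z Y a b A B = A x_Z B  for A in C_a(X x Z), B in C_b(Z x Y)   (lands in C_(a+b-dim Z)(X x Y)).\<close>

definition signed :: "int \<Rightarrow> 'c::ab_group_add \<Rightarrow> 'c" where
  "signed e x = (if even e then x else - x)"

definition geometric_chain_model ::
  "('s \<Rightarrow> int \<Rightarrow> 'c::ab_group_add set) \<Rightarrow> ('s \<Rightarrow> nat) \<Rightarrow> ('s \<Rightarrow> 's \<Rightarrow> 's)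
   \<Rightarrow> ('s \<Rightarrow> int \<Rightarrow> 'c \<Rightarrow> 'c)
   \<Rightarrow> ('s \<Rightarrow> 's \<Rightarrow> int \<Rightarrow> int \<Rightarrow> 'c \<Rightarrow> 'c \<Rightarrow> 'c)
   \<Rightarrow> ('s \<Rightarrow> 's \<Rightarrow> 's \<Rightarrow> int \<Rightarrow> int \<Rightarrow> 'c \<Rightarrow> 'c \<Rightarrow> 'c) \<Rightarrow> bool" where
  "geometric_chain_model Ch dim prd bd fp fpp \<longleftrightarrow>
     \<comment> \<open>each C_k(s) is a subgroup, concentrated in degrees [0, dim s]\<close>
     (\<forall>s k. 0 \<in> Ch s k \<and>
        (\<forall>x\<in>Ch s k. \<forall>y\<in>Ch s k. x + y \<in> Ch s k \<and> - x \<in> Ch s k)) \<and>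
     (\<forall>s k. (k < 0 \<or> k > int (dim s)) \<longrightarrow> Ch s k = {0}) \<and>
     \<comment> \<open>boundary: a homomorphism of degree -1 with square zero\<close>
     (\<forall>s k. \<forall>x\<in>Ch s k. bd s k x \<in> Ch s (k - 1)) \<and>
     (\<forall>s k. \<forall>x\<in>Ch s k. \<forall>y\<in>Ch s k. bd s k (x + y) = bd s k x + bd s k y) \<and>
     (\<forall>s k. \<forall>x\<in>Ch s k. bd s (k - 1) (bd s k x) = 0) \<and>
     \<comment> \<open>fiber product: degree, bilinearity\<close>
     (\<forall>M N p q. \<forall>\<phi>\<in>Ch M p. \<forall>W\<in>Ch (prd M N) q.
        fp M N p q \<phi> W \<in> Ch N (p + q - int (dim M))) \<and>
     (\<forall>M N p q. \<forall>\<phi>\<in>Ch M p. \<forall>\<psi>\<in>Ch M p. \<forall>W\<in>Ch (prd M N) q.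
        fp M N p q (\<phi> + \<psi>) W = fp M N p q \<phi> W + fp M N p q \<psi> W) \<and>
     (\<forall>M N p q. \<forall>\<phi>\<in>Ch M p. \<forall>W\<in>Ch (prd M N) q. \<forall>V\<in>Ch (prd M N) q.
        fp M N p q \<phi> (W + V) = fp M N p q \<phi> W + fp M N p q \<phi> V) \<and>
     (\<forall>X Z Y a b. \<forall>A\<in>Ch (prd X Z) a. \<forall>B\<in>Ch (prd Z Y) b.
        fpp X Z Y a b A B \<in> Ch (prd X Y) (a + b - int (dim Z))) \<and>
     \<comment> \<open>Leibniz rule: d(phi x_M W) = (d phi) x_M W + (-1)^(dim phi + dim M) phi x_M (d W)\<close>
     (\<forall>M N p q. \<forall>\<phi>\<in>Ch M p. \<forall>W\<in>Ch (prd M N) q.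
        bd N (p + q - int (dim M)) (fp M N p q \<phi> W) =
          fp M N (p - 1) q (bd M p \<phi>) W
          + signed (p + int (dim M)) (fp M N p (q - 1) \<phi> (bd (prd M N) q W))) \<and>
     \<comment> \<open>associativity: (phi x_X A) x_Z B = phi x_X (A x_Z B)\<close>
     (\<forall>X Z Y p a b. \<forall>\<phi>\<in>Ch X p. \<forall>A\<in>Ch (prd X Z) a. \<forall>B\<in>Ch (prd Z Y) b.
        fp Z Y (p + a - int (dim X)) b (fp X Z p a \<phi> A) B =
        fp X Y p (a + b - int (dim Z)) \<phi> (fpp X Z Y a b A B))"

text \<open>Finitely graded flow category (with the orientations of the objects and the elements of
  Lambda(X) fixed once and for all).  CC X Y q is the degree-q component of the chain C_XY in
  C_*(X x Y); its nonzero components sit in degrees congruent to dim X + ti(X,Y) - 1 mod 2N.\<close>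

definition finitely_graded_flow_category ::
  "('s \<Rightarrow> int \<Rightarrow> 'c::ab_group_add set) \<Rightarrow> ('s \<Rightarrow> nat) \<Rightarrow> ('s \<Rightarrow> 's \<Rightarrow> 's)
   \<Rightarrow> ('s \<Rightarrow> int \<Rightarrow> 'c \<Rightarrow> 'c)
   \<Rightarrow> ('s \<Rightarrow> 's \<Rightarrow> 's \<Rightarrow> int \<Rightarrow> int \<Rightarrow> 'c \<Rightarrow> 'c \<Rightarrow> 'c)
   \<Rightarrow> nat \<Rightarrow> 's set \<Rightarrow> ('s \<Rightarrow> 's \<Rightarrow> int) \<Rightarrow> ('s \<Rightarrow> 's \<Rightarrow> int \<Rightarrow> 'c) \<Rightarrow> bool" where
  "finitely_graded_flow_category Ch dim prd bd fpp N Ob ti CC \<longleftrightarrow>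
     finite Ob \<and>
     (\<forall>X\<in>Ob. \<forall>Y\<in>Ob. \<forall>Z\<in>Ob. [ti X Y + ti Y Z = ti X Z] (mod (2 * int N))) \<and>
     (\<forall>X\<in>Ob. \<forall>Y\<in>Ob. \<forall>q. CC X Y q \<in> Ch (prd X Y) q) \<and>
     (\<forall>X\<in>Ob. \<forall>Y\<in>Ob. \<forall>q. CC X Y q \<noteq> 0 \<longrightarrow>
        [q = int (dim X) + ti X Y - 1] (mod (2 * int N))) \<and>
     \<comment> \<open>(-1)^dim X d C_XY = sum_Z (-1)^ti(X,Z) C_XZ x_Z C_ZY, componentwise in degree q\<close>
     (\<forall>X\<in>Ob. \<forall>Y\<in>Ob. \<forall>q.
        signed (int (dim X)) (bd (prd X Y) (q + 1) (CC X Y (q + 1))) =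
        (\<Sum>Z\<in>Ob. signed (ti X Z)
           (\<Sum>a\<in>{0..int (dim (prd X Z))}.
              fpp X Z Y a (q - a + int (dim Z)) (CC X Z a) (CC Z Y (q - a + int (dim Z))))))"

definition flow_complex :: "('s \<Rightarrow> int \<Rightarrow> 'c::zero set) \<Rightarrow> 's set \<Rightarrow> ('s \<Rightarrow> int \<Rightarrow> 'c) set" where
  "flow_complex Ch Ob = {\<Phi>. \<forall>X k. \<Phi> X k \<in> (if X \<in> Ob then Ch X k else {0})}"

definition flow_differential ::
  "('s \<Rightarrow> nat) \<Rightarrow> ('s \<Rightarrow> int \<Rightarrow> 'c::ab_group_add \<Rightarrow> 'c)
   \<Rightarrow> ('s \<Rightarrow> 's \<Rightarrow> int \<Rightarrow> int \<Rightarrow> 'c \<Rightarrow> 'c \<Rightarrow> 'c)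
   \<Rightarrow> 's set \<Rightarrow> ('s \<Rightarrow> 's \<Rightarrow> int \<Rightarrow> 'c) \<Rightarrow> ('s \<Rightarrow> int \<Rightarrow> 'c) \<Rightarrow> ('s \<Rightarrow> int \<Rightarrow> 'c)" where
  "flow_differential dim bd fp Ob CC \<Phi> = (\<lambda>Y j.
     if Y \<in> Ob then
       bd Y (j + 1) (\<Phi> Y (j + 1)) +
       (\<Sum>X\<in>Ob. \<Sum>k\<in>{0..int (dim X)}.
          signed k (fp X Y k (j - k + int (dim X)) (\<Phi> X k) (CC X Y (j - k + int (dim X)))))
     else 0)"

definition single_chain :: "'s \<Rightarrow> int \<Rightarrow> 'c::zero \<Rightarrow> ('s \<Rightarrow> int \<Rightarrow> 'c)" where
  "single_chain X k \<phi> = (\<lambda>Y j. if Y = X \<and> j = k then \<phi> else 0)"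

end

theory Submission
  imports Defs
begin

lemma signed_signed[simp]: "signed a (signed b x) = signed (a + b) x"
  by (auto simp: signed_def)

lemma signed_add: "signed e (x + y) = signed e x + signed e y"
  by (auto simp: signed_def)

lemma signed_zero[simp]: "signed e 0 = 0"
  by (auto simp: signed_def)

lemma signed_sum: "signed e (sum f A) = (\<Sum>i\<in>A. signed e (f i))"
  by (auto simp: signed_def sum_negf)

lemma signed_even: "even e \<Longrightarrow> signed e x = x"
  by (auto simp: signed_def)

lemma sum_vanish_outside:
  fixes g :: "'a \<Rightarrow> 'b::comm_monoid_add"
  assumes "finite I1" "finite I2" "\<And>i. i \<notin> I1 \<inter> I2 \<Longrightarrow> g i = 0"
  shows "sum g I1 = sum g I2"
proof -
  have "sum g I1 = sum g (I1 \<inter> I2)"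
    by (rule sum.mono_neutral_right) (use assms in auto)
  also have "\<dots> = sum g I2"
    by (rule sum.mono_neutral_left) (use assms in auto)
  finally show ?thesis .
qed

locale gcm =
  fixes Ch :: "'s \<Rightarrow> int \<Rightarrow> 'c::ab_group_add set"
    and dim :: "'s \<Rightarrow> nat" and prd :: "'s \<Rightarrow> 's \<Rightarrow> 's"
    and bd :: "'s \<Rightarrow> int \<Rightarrow> 'c \<Rightarrow> 'c"
    and fp :: "'s \<Rightarrow> 's \<Rightarrow> int \<Rightarrow> int \<Rightarrow> 'c \<Rightarrow> 'c \<Rightarrow> 'c"
    and fpp :: "'s \<Rightarrow> 's \<Rightarrow> 's \<Rightarrow> int \<Rightarrow> int \<Rightarrow> 'c \<Rightarrow> 'c \<Rightarrow> 'c"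
  assumes gcm: "geometric_chain_model Ch dim prd bd fp fpp"
begin

lemmas G = gcm[unfolded geometric_chain_model_def]
lemmas G1 = G[THEN conjunct1]
lemmas G2 = G[THEN conjunct2, THEN conjunct1]
lemmas G3 = G[THEN conjunct2, THEN conjunct2, THEN conjunct1]
lemmas G4 = G[THEN conjunct2, THEN conjunct2, THEN conjunct2, THEN conjunct1]
lemmas G5 = G[THEN conjunct2, THEN conjunct2, THEN conjunct2, THEN conjunct2, THEN conjunct1]
lemmas G6 = G[THEN conjunct2, THEN conjunct2, THEN conjunct2, THEN conjunct2, THEN conjunct2, THEN conjunct1]
lemmas G7 = G[THEN conjunct2, THEN conjunct2, THEN conjunct2, THEN conjunct2, THEN conjunct2, THEN conjunct2, THEN conjunct1]
lemmas G8 = G[THEN conjunct2, THEN conjunct2, THEN conjunct2, THEN conjunct2, THEN conjunct2, THEN conjunct2, THEN conjunct2, THEN conjunct1]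
lemmas G9 = G[THEN conjunct2, THEN conjunct2, THEN conjunct2, THEN conjunct2, THEN conjunct2, THEN conjunct2, THEN conjunct2, THEN conjunct2, THEN conjunct1]
lemmas G10 = G[THEN conjunct2, THEN conjunct2, THEN conjunct2, THEN conjunct2, THEN conjunct2, THEN conjunct2, THEN conjunct2, THEN conjunct2, THEN conjunct2, THEN conjunct1]
lemmas G11 = G[THEN conjunct2, THEN conjunct2, THEN conjunct2, THEN conjunct2, THEN conjunct2, THEN conjunct2, THEN conjunct2, THEN conjunct2, THEN conjunct2, THEN conjunct2]

lemma Ch_zero[simp]: "0 \<in> Ch s k" using G1 by blast
lemma Ch_add: "x \<in> Ch s k \<Longrightarrow> y \<in> Ch s k \<Longrightarrow> x + y \<in> Ch s k"
  using G1 by blast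
lemma Ch_neg: "x \<in> Ch s k \<Longrightarrow> - x \<in> Ch s k"
  using G1 by blast
lemma Ch_out: "x \<in> Ch s k \<Longrightarrow> k < 0 \<or> k > int (dim s) \<Longrightarrow> x = 0"
  using G2 by blast
lemma bd_in: "x \<in> Ch s (k + 1) \<Longrightarrow> bd s (k + 1) x \<in> Ch s k"
  using G3 by (metis add_diff_cancel_right')
lemma bd_add: "x \<in> Ch s k \<Longrightarrow> y \<in> Ch s k \<Longrightarrow> bd s k (x + y) = bd s k x + bd s k y"
  using G4 by blast
lemma bd_bd: "x \<in> Ch s (k + 1) \<Longrightarrow> bd s k (bd s (k + 1) x) = 0"
  using G5 by (metis add_diff_cancel_right')
lemma fp_in: "\<phi> \<in> Ch M p \<Longrightarrow> W \<in> Ch (prd M N) q \<Longrightarrow> r = p + q - int (dim M)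
   \<Longrightarrow> fp M N p q \<phi> W \<in> Ch N r"
  using G6 by blast
lemma fp_add1: "\<phi> \<in> Ch M p \<Longrightarrow> \<psi> \<in> Ch M p \<Longrightarrow> W \<in> Ch (prd M N) q \<Longrightarrow>
   fp M N p q (\<phi> + \<psi>) W = fp M N p q \<phi> W + fp M N p q \<psi> W"
  using G7 by blast
lemma fp_add2: "\<phi> \<in> Ch M p \<Longrightarrow> W \<in> Ch (prd M N) q \<Longrightarrow> V \<in> Ch (prd M N) q \<Longrightarrow>
   fp M N p q \<phi> (W + V) = fp M N p q \<phi> W + fp M N p q \<phi> V"
  using G8 by blast
lemma fpp_in: "A \<in> Ch (prd X Z) a \<Longrightarrow> B \<in> Ch (prd Z Y) b \<Longrightarrow> r = a + b - int (dim Z) \<Longrightarrow>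
   fpp X Z Y a b A B \<in> Ch (prd X Y) r"
  using G9 by blast
lemma leibniz: "\<phi> \<in> Ch M p \<Longrightarrow> W \<in> Ch (prd M N) q \<Longrightarrow> r = p + q - int (dim M) \<Longrightarrow>
   bd N r (fp M N p q \<phi> W) = fp M N (p - 1) q (bd M p \<phi>) W
          + signed (p + int (dim M)) (fp M N p (q - 1) \<phi> (bd (prd M N) q W))"
  using G10 by blast
lemma assoc: "\<phi> \<in> Ch X p \<Longrightarrow> A \<in> Ch (prd X Z) a \<Longrightarrow> B \<in> Ch (prd Z Y) b \<Longrightarrow> c = a + b - int (dim Z) \<Longrightarrow>
   fp X Y p c \<phi> (fpp X Z Y a b A B) = fp Z Y (p + a - int (dim X)) b (fp X Z p a \<phi> A) B"
  using G11 by metis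

lemma Ch_sum: "(\<And>i. i \<in> A \<Longrightarrow> f i \<in> Ch s k) \<Longrightarrow> sum f A \<in> Ch s k"
  by (induction A rule: infinite_finite_induct) (auto intro: Ch_add)
lemma Ch_signed: "x \<in> Ch s k \<Longrightarrow> signed e x \<in> Ch s k"
  by (auto simp: signed_def intro: Ch_neg)

lemma bd_zero[simp]: "bd s k 0 = 0"
  using bd_add[of 0 s k 0] by simp
lemma bd_neg: "x \<in> Ch s k \<Longrightarrow> bd s k (- x) = - bd s k x"
  using bd_add[of x s k "-x"] Ch_neg[of x s k] by (simp add: eq_neg_iff_add_eq_0 add.commute)
lemma bd_signed: "x \<in> Ch s k \<Longrightarrow> bd s k (signed e x) = signed e (bd s k x)"
  by (auto simp: signed_def bd_neg)
lemma bd_sum: "(\<And>i. i \<in> A \<Longrightarrow> f i \<in> Ch s k) \<Longrightarrow> bd s k (sum f A) = (\<Sum>i\<in>A. bd s k (f i))"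
proof (induction A rule: infinite_finite_induct)
  case (insert x F)
  then show ?case by (simp add: bd_add Ch_sum)
qed auto

lemma fp_zero1[simp]: "W \<in> Ch (prd M N) q \<Longrightarrow> fp M N p q 0 W = 0"
  using fp_add1[of 0 M p 0 W N q] by simp
lemma fp_zero2[simp]: "\<phi> \<in> Ch M p \<Longrightarrow> fp M N p q \<phi> 0 = 0"
  using fp_add2[of \<phi> M p 0 N q 0] by simp
lemma fp_neg1: "\<phi> \<in> Ch M p \<Longrightarrow> W \<in> Ch (prd M N) q \<Longrightarrow> fp M N p q (- \<phi>) W = - fp M N p q \<phi> W"
  using fp_add1[of \<phi> M p "-\<phi>" W N q] Ch_neg[of \<phi> M p] by (simp add: eq_neg_iff_add_eq_0 add.commute)
lemma fp_neg2: "\<phi> \<in> Ch M p \<Longrightarrow> W \<in> Ch (prd M N) q \<Longrightarrow> fp M N p q \<phi> (- W) = - fp M N p q \<phi> W"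
  using fp_add2[of \<phi> M p W N q "-W"] Ch_neg[of W "prd M N" q] by (simp add: eq_neg_iff_add_eq_0 add.commute)
lemma fp_signed1: "\<phi> \<in> Ch M p \<Longrightarrow> W \<in> Ch (prd M N) q \<Longrightarrow> fp M N p q (signed e \<phi>) W = signed e (fp M N p q \<phi> W)"
  by (auto simp: signed_def fp_neg1)
lemma fp_signed2: "\<phi> \<in> Ch M p \<Longrightarrow> W \<in> Ch (prd M N) q \<Longrightarrow> fp M N p q \<phi> (signed e W) = signed e (fp M N p q \<phi> W)"
  by (auto simp: signed_def fp_neg2)
lemma fp_sum1: "(\<And>i. i \<in> A \<Longrightarrow> f i \<in> Ch M p) \<Longrightarrow> W \<in> Ch (prd M N) q \<Longrightarrow>
   fp M N p q (sum f A) W = (\<Sum>i\<in>A. fp M N p q (f i) W)"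
proof (induction A rule: infinite_finite_induct)
  case (insert x F)
  then show ?case by (simp add: fp_add1 Ch_sum)
qed auto
lemma fp_sum2: "\<phi> \<in> Ch M p \<Longrightarrow> (\<And>i. i \<in> A \<Longrightarrow> f i \<in> Ch (prd M N) q) \<Longrightarrow>
   fp M N p q \<phi> (sum f A) = (\<Sum>i\<in>A. fp M N p q \<phi> (f i))"
proof (induction A rule: infinite_finite_induct)
  case (insert x F)
  then show ?case by (simp add: fp_add2 Ch_sum)
qed auto

end

locale fgfc = gcm Ch dim prd bd fp fpp
  for Ch :: "'s \<Rightarrow> int \<Rightarrow> 'c::ab_group_add set"
    and dim :: "'s \<Rightarrow> nat" and prd :: "'s \<Rightarrow> 's \<Rightarrow> 's"
    and bd :: "'s \<Rightarrow> int \<Rightarrow> 'c \<Rightarrow> 'c"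
    and fp :: "'s \<Rightarrow> 's \<Rightarrow> int \<Rightarrow> int \<Rightarrow> 'c \<Rightarrow> 'c \<Rightarrow> 'c"
    and fpp :: "'s \<Rightarrow> 's \<Rightarrow> 's \<Rightarrow> int \<Rightarrow> int \<Rightarrow> 'c \<Rightarrow> 'c \<Rightarrow> 'c" +
  fixes N :: nat and Ob :: "'s set" and ti :: "'s \<Rightarrow> 's \<Rightarrow> int"
    and CC :: "'s \<Rightarrow> 's \<Rightarrow> int \<Rightarrow> 'c"
  assumes fc: "finitely_graded_flow_category Ch dim prd bd fpp N Ob ti CC"
begin

lemmas F = fc[unfolded finitely_graded_flow_category_def]
lemma fin[simp]: "finite Ob" using F[THEN conjunct1] .
lemma cocycle: "X \<in> Ob \<Longrightarrow> Y \<in> Ob \<Longrightarrow> Z \<in> Ob \<Longrightarrow> [ti X Y + ti Y Z = ti X Z] (mod (2 * int N))"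
  using F[THEN conjunct2, THEN conjunct1] by blast
lemma CC_in[simp]: "X \<in> Ob \<Longrightarrow> Y \<in> Ob \<Longrightarrow> CC X Y q \<in> Ch (prd X Y) q"
  using F[THEN conjunct2, THEN conjunct2, THEN conjunct1] by blast
lemma CC_cong: "X \<in> Ob \<Longrightarrow> Y \<in> Ob \<Longrightarrow> CC X Y q \<noteq> 0 \<Longrightarrow>
        [q = int (dim X) + ti X Y - 1] (mod (2 * int N))"
  using F[THEN conjunct2, THEN conjunct2, THEN conjunct2, THEN conjunct1] by blast
lemma flow_eq: "X \<in> Ob \<Longrightarrow> Y \<in> Ob \<Longrightarrow>
        signed (int (dim X)) (bd (prd X Y) (q + 1) (CC X Y (q + 1))) =
        (\<Sum>Z\<in>Ob. signed (ti X Z)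
           (\<Sum>a\<in>{0..int (dim (prd X Z))}.
              fpp X Z Y a (q - a + int (dim Z)) (CC X Z a) (CC Z Y (q - a + int (dim Z)))))"
  using F[THEN conjunct2, THEN conjunct2, THEN conjunct2, THEN conjunct2] by blast


abbreviation "D \<equiv> flow_differential dim bd fp Ob CC"
abbreviation "FC \<equiv> flow_complex Ch Ob"

definition T where
  "T \<Phi> Y j = (\<Sum>X\<in>Ob. \<Sum>k\<in>{0..int (dim X)}.
          signed k (fp X Y k (j - k + int (dim X)) (\<Phi> X k) (CC X Y (j - k + int (dim X)))))"

lemma D_eq: "Y \<in> Ob \<Longrightarrow> D \<Phi> Y j = bd Y (j + 1) (\<Phi> Y (j + 1)) + T \<Phi> Y j"
  unfolding flow_differential_def T_def by simp
lemma D_out: "Y \<notin> Ob \<Longrightarrow> D \<Phi> Y j = 0"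
  unfolding flow_differential_def by simp

lemma FC_in: "\<Phi> \<in> FC \<Longrightarrow> X \<in> Ob \<Longrightarrow> \<Phi> X k \<in> Ch X k"
proof -
  assume a: "\<Phi> \<in> FC" "X \<in> Ob"
  then have "\<Phi> X k \<in> (if X \<in> Ob then Ch X k else {0})" unfolding flow_complex_def by blast
  with a show ?thesis by simp
qed
lemma FC_out: "\<Phi> \<in> FC \<Longrightarrow> X \<notin> Ob \<Longrightarrow> \<Phi> X k = 0"
proof -
  assume a: "\<Phi> \<in> FC" "X \<notin> Ob"
  then have "\<Phi> X k \<in> (if X \<in> Ob then Ch X k else {0})" unfolding flow_complex_def by blast
  with a show ?thesis by simp
qed

lemma T_in: "\<Phi> \<in> FC \<Longrightarrow> Y \<in> Ob \<Longrightarrow> T \<Phi> Y j \<in> Ch Y j"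
  unfolding T_def
  by (intro Ch_sum Ch_signed fp_in[OF FC_in]) auto

lemma D_in: "\<Phi> \<in> FC \<Longrightarrow> Y \<in> Ob \<Longrightarrow> D \<Phi> Y j \<in> Ch Y j"
  by (simp add: D_eq Ch_add bd_in FC_in T_in)

lemma D_FC: "\<Phi> \<in> FC \<Longrightarrow> D \<Phi> \<in> FC"
  unfolding flow_complex_def[of Ch Ob] using D_in D_out by (auto simp: flow_complex_def)


lemma T_add: "\<Phi> \<in> FC \<Longrightarrow> \<Psi> \<in> FC \<Longrightarrow> Y \<in> Ob \<Longrightarrow>
   T (\<lambda>X k. \<Phi> X k + \<Psi> X k) Y j = T \<Phi> Y j + T \<Psi> Y j"
  unfolding T_def by (simp add: fp_add1 FC_in signed_add sum.distrib)

lemma D_add: "\<Phi> \<in> FC \<Longrightarrow> \<Psi> \<in> FC \<Longrightarrow>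
   D (\<lambda>X k. \<Phi> X k + \<Psi> X k) = (\<lambda>Y j. D \<Phi> Y j + D \<Psi> Y j)"
proof (intro ext)
  fix Y j assume a: "\<Phi> \<in> FC" "\<Psi> \<in> FC"
  show "D (\<lambda>X k. \<Phi> X k + \<Psi> X k) Y j = D \<Phi> Y j + D \<Psi> Y j"
  proof (cases "Y \<in> Ob")
    case True
    then show ?thesis using a by (simp add: D_eq T_add bd_add FC_in algebra_simps)
  next
    case False
    then show ?thesis by (simp add: D_out)
  qed
qed

lemma ti_self: "X \<in> Ob \<Longrightarrow> [ti X X = 0] (mod (2 * int N))"
  using cocycle[of X X X] by (simp add: cong_iff_dvd_diff)

lemma D_grading: "X \<in> Ob \<Longrightarrow> \<phi> \<in> Ch X k \<Longrightarrow> Y \<in> Ob \<Longrightarrow>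
   D (single_chain X k \<phi>) Y j \<noteq> 0 \<Longrightarrow> [k - j + ti X Y = 1] (mod (2 * int N))"
proof -
  assume X: "X \<in> Ob" and phi: "\<phi> \<in> Ch X k" and Y: "Y \<in> Ob" and nz: "D (single_chain X k \<phi>) Y j \<noteq> 0"
  have sc: "single_chain X k \<phi> X' k' \<in> Ch X' k'" for X' k'
    using phi by (auto simp: single_chain_def)
  show ?thesis
  proof (cases "bd Y (j + 1) (single_chain X k \<phi> Y (j + 1)) = 0")
    case False
    then have "Y = X" "k = j + 1" by (auto simp: single_chain_def split: if_splits)
    then show ?thesis using ti_self[OF X] by (simp add: cong_iff_dvd_diff)
  next
    case True
    then have "T (single_chain X k \<phi>) Y j \<noteq> 0" using nz Y by (simp add: D_eq)
    then obtain X' k' where X': "X' \<in> Ob" and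
      "signed k' (fp X' Y k' (j - k' + int (dim X')) (single_chain X k \<phi> X' k') (CC X' Y (j - k' + int (dim X')))) \<noteq> 0"
      unfolding T_def by (meson sum.neutral)
    then have nz2: "fp X' Y k' (j - k' + int (dim X')) (single_chain X k \<phi> X' k') (CC X' Y (j - k' + int (dim X'))) \<noteq> 0"
      by auto
    then have "X' = X" "k' = k" using X' Y by (auto simp: single_chain_def split: if_splits)
    with nz2 have "CC X Y (j - k + int (dim X)) \<noteq> 0" using sc[of X k] by auto
    from CC_cong[OF X Y this] have "2 * int N dvd (j - k + int (dim X)) - (int (dim X) + ti X Y - 1)"
      by (simp add: cong_iff_dvd_diff)
    moreover have e: "k - j + ti X Y - 1 = - ((j - k + int (dim X)) - (int (dim X) + ti X Y - 1))" by simp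
    ultimately show ?thesis by (simp only: cong_iff_dvd_diff e dvd_minus_iff)
  qed
qed

end

lemma signed_succ: "signed (i + 1) x = - signed i x"
  by (auto simp: signed_def)

lemma signed_par: "even (a - b) \<Longrightarrow> signed a x = signed b x"
  by (auto simp: signed_def)

lemma sum_shift1: "(\<Sum>k\<in>{0..(d::int)}. g k) = (\<Sum>i\<in>{-1..d-1}. g (i + 1))"
  by (rule sum.reindex_bij_witness[of _ "\<lambda>i. i + 1" "\<lambda>k. k - 1"]) auto

lemma sum_shift: "(\<Sum>a\<in>{0..(d::int)}. g a) = (\<Sum>k\<in>{c..c+d}. g (k - c))"
  by (rule sum.reindex_bij_witness[of _ "\<lambda>k. k - c" "\<lambda>a. a + c"]) auto

context fgfc
begin

lemma bdT: "\<Phi> \<in> FC \<Longrightarrow> Y \<in> Ob \<Longrightarrow> bd Y (j + 1) (T \<Phi> Y (j + 1)) =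
  (\<Sum>X\<in>Ob. \<Sum>k\<in>{0..int (dim X)}. signed k (fp X Y (k - 1) (j + 1 - k + int (dim X)) (bd X k (\<Phi> X k)) (CC X Y (j + 1 - k + int (dim X)))))
 + (\<Sum>X\<in>Ob. \<Sum>k\<in>{0..int (dim X)}. signed k (signed (k + int (dim X)) (fp X Y k (j + 1 - k + int (dim X) - 1) (\<Phi> X k) (bd (prd X Y) (j + 1 - k + int (dim X)) (CC X Y (j + 1 - k + int (dim X)))))))"
proof -
  assume P: "\<Phi> \<in> FC" and Y: "Y \<in> Ob"
  have "bd Y (j + 1) (T \<Phi> Y (j + 1)) = (\<Sum>X\<in>Ob. \<Sum>k\<in>{0..int (dim X)}. signed k (bd Y (j + 1)
        (fp X Y k (j + 1 - k + int (dim X)) (\<Phi> X k) (CC X Y (j + 1 - k + int (dim X))))))"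
    unfolding T_def using P Y
    by (simp add: bd_sum bd_signed Ch_sum Ch_signed fp_in FC_in)
  also have "\<dots> = (\<Sum>X\<in>Ob. \<Sum>k\<in>{0..int (dim X)}.
     signed k (fp X Y (k - 1) (j + 1 - k + int (dim X)) (bd X k (\<Phi> X k)) (CC X Y (j + 1 - k + int (dim X))))
   + signed k (signed (k + int (dim X)) (fp X Y k (j + 1 - k + int (dim X) - 1) (\<Phi> X k) (bd (prd X Y) (j + 1 - k + int (dim X)) (CC X Y (j + 1 - k + int (dim X)))))))"
    apply (intro sum.cong refl)
    apply (subst leibniz[OF FC_in[OF P] CC_in])
    using Y by (auto simp: signed_add simp del: signed_signed)
  finally show ?thesis by (simp add: sum.distrib del: signed_signed)
qed

lemma TD: "\<Phi> \<in> FC \<Longrightarrow> Y \<in> Ob \<Longrightarrow> T (D \<Phi>) Y j =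
  (\<Sum>X\<in>Ob. \<Sum>k\<in>{0..int (dim X)}. signed k (fp X Y k (j - k + int (dim X)) (bd X (k + 1) (\<Phi> X (k + 1))) (CC X Y (j - k + int (dim X)))))
 + (\<Sum>X\<in>Ob. \<Sum>k\<in>{0..int (dim X)}. signed k (fp X Y k (j - k + int (dim X)) (T \<Phi> X k) (CC X Y (j - k + int (dim X)))))"
proof -
  assume P: "\<Phi> \<in> FC" and Y: "Y \<in> Ob"
  have "T (D \<Phi>) Y j = (\<Sum>X\<in>Ob. \<Sum>k\<in>{0..int (dim X)}.
     signed k (fp X Y k (j - k + int (dim X)) (bd X (k + 1) (\<Phi> X (k + 1))) (CC X Y (j - k + int (dim X))))
   + signed k (fp X Y k (j - k + int (dim X)) (T \<Phi> X k) (CC X Y (j - k + int (dim X)))))"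
    unfolding T_def[of "D \<Phi>"]
    apply (intro sum.cong refl)
    apply (subst D_eq, assumption)
    apply (subst fp_add1)
    using P Y by (auto simp: signed_add bd_in FC_in T_in)
  then show ?thesis by (simp add: sum.distrib)
qed

lemma LA_TA: "\<Phi> \<in> FC \<Longrightarrow> Y \<in> Ob \<Longrightarrow>
  (\<Sum>X\<in>Ob. \<Sum>k\<in>{0..int (dim X)}. signed k (fp X Y (k - 1) (j + 1 - k + int (dim X)) (bd X k (\<Phi> X k)) (CC X Y (j + 1 - k + int (dim X)))))
 + (\<Sum>X\<in>Ob. \<Sum>k\<in>{0..int (dim X)}. signed k (fp X Y k (j - k + int (dim X)) (bd X (k + 1) (\<Phi> X (k + 1))) (CC X Y (j - k + int (dim X))))) = 0"
proof -
  assume P: "\<Phi> \<in> FC" and Y: "Y \<in> Ob"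
  have "(\<Sum>k\<in>{0..int (dim X)}. signed k (fp X Y (k - 1) (j + 1 - k + int (dim X)) (bd X k (\<Phi> X k)) (CC X Y (j + 1 - k + int (dim X)))))
    + (\<Sum>k\<in>{0..int (dim X)}. signed k (fp X Y k (j - k + int (dim X)) (bd X (k + 1) (\<Phi> X (k + 1))) (CC X Y (j - k + int (dim X))))) = 0"
    if X: "X \<in> Ob" for X
  proof -
    define d where "d = int (dim X)"
    define F where "F i = signed i (fp X Y i (j - i + d) (bd X (i + 1) (\<Phi> X (i + 1))) (CC X Y (j - i + d)))" for i
    have F0: "F i = 0" if "i \<notin> {0..d} \<inter> {-1..d-1}" for i
    proof -
      have "bd X (i + 1) (\<Phi> X (i + 1)) = 0"
      proof (cases "i < 0")
        case True
        then show ?thesis using bd_in[OF FC_in[OF P X]] Ch_out by blast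
      next
        case False
        then have "i + 1 > int (dim X)" using that d_def by auto
        then have "\<Phi> X (i + 1) = 0" using FC_in[OF P X] Ch_out by blast
        then show ?thesis by simp
      qed
      then show ?thesis unfolding F_def using X Y by simp
    qed
    have "(\<Sum>k\<in>{0..d}. signed k (fp X Y (k - 1) (j + 1 - k + d) (bd X k (\<Phi> X k)) (CC X Y (j + 1 - k + d))))
        = (\<Sum>i\<in>{-1..d-1}. - F i)"
      unfolding sum_shift1 by (intro sum.cong refl) (simp add: F_def signed_succ algebra_simps)
    also have "\<dots> = - (\<Sum>i\<in>{0..d}. F i)"
      using sum_vanish_outside[of "{0..d}" "{-1..d-1}" F] F0 by (simp add: sum_negf)
    finally show ?thesis unfolding F_def d_def by simp
  qed
  then show ?thesis by (simp add: sum.distrib[symmetric])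
qed

end

context fgfc
begin

definition GG where
  "GG \<Phi> Y j X Z m k = fp Z Y k (j - k + int (dim Z))
     (fp X Z m (k - m + int (dim X)) (\<Phi> X m) (CC X Z (k - m + int (dim X)))) (CC Z Y (j - k + int (dim Z)))"

lemma GG_zero_out: "\<Phi> \<in> FC \<Longrightarrow> X \<in> Ob \<Longrightarrow> Y \<in> Ob \<Longrightarrow> Z \<in> Ob \<Longrightarrow>
  k \<notin> {m - int (dim X) .. m - int (dim X) + int (dim (prd X Z))} \<inter> {0..int (dim Z)} \<Longrightarrow> GG \<Phi> Y j X Z m k = 0"
proof -
  assume P: "\<Phi> \<in> FC" and X: "X \<in> Ob" and Y: "Y \<in> Ob" and Z: "Z \<in> Ob"
    and k: "k \<notin> {m - int (dim X) .. m - int (dim X) + int (dim (prd X Z))} \<inter> {0..int (dim Z)}"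
  show ?thesis
  proof (cases "k \<in> {0..int (dim Z)}")
    case True
    then have "k - m + int (dim X) < 0 \<or> k - m + int (dim X) > int (dim (prd X Z))" using k by auto
    then have "CC X Z (k - m + int (dim X)) = 0" using CC_in[OF X Z] Ch_out by blast
    then show ?thesis unfolding GG_def using P X Y Z by (simp add: FC_in)
  next
    case False
    have "fp X Z m (k - m + int (dim X)) (\<Phi> X m) (CC X Z (k - m + int (dim X))) \<in> Ch Z k"
      by (rule fp_in[OF FC_in[OF P X] CC_in[OF X Z]]) simp
    then have "fp X Z m (k - m + int (dim X)) (\<Phi> X m) (CC X Z (k - m + int (dim X))) = 0"
      using False Ch_out by auto
    then show ?thesis unfolding GG_def using Y Z by simp
  qed
qed

lemma LB_term: "\<Phi> \<in> FC \<Longrightarrow> X \<in> Ob \<Longrightarrow> Y \<in> Ob \<Longrightarrow>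
  signed m (signed (m + int (dim X)) (fp X Y m (j + 1 - m + int (dim X) - 1) (\<Phi> X m)
     (bd (prd X Y) (j + 1 - m + int (dim X)) (CC X Y (j + 1 - m + int (dim X))))))
  = (\<Sum>Z\<in>Ob. \<Sum>k\<in>{0..int (dim Z)}. signed (ti X Z) (GG \<Phi> Y j X Z m k))"
proof -
  assume P: "\<Phi> \<in> FC" and X: "X \<in> Ob" and Y: "Y \<in> Ob"
  define p where "p = j - m + int (dim X)"
  have e1: "j + 1 - m + int (dim X) - 1 = p" "j + 1 - m + int (dim X) = p + 1" unfolding p_def by simp_all
  have bdin: "bd (prd X Y) (p + 1) (CC X Y (p + 1)) \<in> Ch (prd X Y) p"
    using bd_in CC_in[OF X Y] by blast
  have fppin: "fpp X Z Y a (p - a + int (dim Z)) (CC X Z a) (CC Z Y (p - a + int (dim Z))) \<in> Ch (prd X Y) p"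
    if Z: "Z \<in> Ob" for Z a
    by (rule fpp_in[OF CC_in[OF X Z] CC_in[OF Z Y]]) simp
  have "signed m (signed (m + int (dim X)) (fp X Y m (j + 1 - m + int (dim X) - 1) (\<Phi> X m)
     (bd (prd X Y) (j + 1 - m + int (dim X)) (CC X Y (j + 1 - m + int (dim X))))))
     = fp X Y m p (\<Phi> X m) (signed (int (dim X)) (bd (prd X Y) (p + 1) (CC X Y (p + 1))))"
    unfolding e1 using signed_par[of "m + (m + int (dim X))" "int (dim X)"]
    by (simp add: fp_signed2[OF FC_in[OF P X] bdin])
  also have "\<dots> = fp X Y m p (\<Phi> X m) (\<Sum>Z\<in>Ob. signed (ti X Z)
           (\<Sum>a\<in>{0..int (dim (prd X Z))}.
              fpp X Z Y a (p - a + int (dim Z)) (CC X Z a) (CC Z Y (p - a + int (dim Z)))))"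
    by (simp add: flow_eq[OF X Y])
  also have "\<dots> = (\<Sum>Z\<in>Ob. signed (ti X Z)
           (\<Sum>a\<in>{0..int (dim (prd X Z))}.
              fp X Y m p (\<Phi> X m) (fpp X Z Y a (p - a + int (dim Z)) (CC X Z a) (CC Z Y (p - a + int (dim Z))))))"
    using FC_in[OF P X] fppin
    by (simp add: fp_sum2 fp_signed2 Ch_sum Ch_signed)
  also have "\<dots> = (\<Sum>Z\<in>Ob. signed (ti X Z)
           (\<Sum>a\<in>{0..int (dim (prd X Z))}.
              fp Z Y (m + a - int (dim X)) (p - a + int (dim Z)) (fp X Z m a (\<Phi> X m) (CC X Z a)) (CC Z Y (p - a + int (dim Z)))))"
    apply (intro sum.cong refl arg_cong[where f="signed _"])
    apply (rule assoc[OF FC_in[OF P X] CC_in[OF X] CC_in[OF _ Y]])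
    by auto
  also have "\<dots> = (\<Sum>Z\<in>Ob. signed (ti X Z)
           (\<Sum>k\<in>{m - int (dim X) .. m - int (dim X) + int (dim (prd X Z))}. GG \<Phi> Y j X Z m k))"
    apply (rule sum.cong[OF refl])
    apply (rule arg_cong[where f="signed _"])
    apply (subst sum_shift[where c="m - int (dim X)"])
    apply (rule sum.cong[OF refl])
    by (simp add: GG_def p_def algebra_simps)
  also have "\<dots> = (\<Sum>Z\<in>Ob. signed (ti X Z) (\<Sum>k\<in>{0..int (dim Z)}. GG \<Phi> Y j X Z m k))"
    apply (rule sum.cong[OF refl])
    apply (rule arg_cong[where f="signed _"])
    apply (rule sum_vanish_outside)
    using GG_zero_out[OF P X Y] by auto
  finally show ?thesis by (simp add: signed_sum)
qed


lemma TC_eq: "\<Phi> \<in> FC \<Longrightarrow> Y \<in> Ob \<Longrightarrow>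
  (\<Sum>Z\<in>Ob. \<Sum>k\<in>{0..int (dim Z)}. signed k (fp Z Y k (j - k + int (dim Z)) (T \<Phi> Z k) (CC Z Y (j - k + int (dim Z)))))
  = (\<Sum>Z\<in>Ob. \<Sum>k\<in>{0..int (dim Z)}. \<Sum>X\<in>Ob. \<Sum>m\<in>{0..int (dim X)}. signed (k + m) (GG \<Phi> Y j X Z m k))"
  by (simp add: T_def GG_def fp_sum1 fp_signed1 signed_sum Ch_sum Ch_signed fp_in FC_in)

lemma swap4:
  assumes "finite A" "\<And>x. x \<in> A \<Longrightarrow> finite (B x)"
  shows "(\<Sum>x\<in>A. \<Sum>y\<in>B x. \<Sum>u\<in>A. \<Sum>v\<in>B u. f x y u v) = (\<Sum>u\<in>A. \<Sum>v\<in>B u. \<Sum>x\<in>A. \<Sum>y\<in>B x. f x y u v)"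
proof -
  have h: "(\<Sum>x\<in>A. \<Sum>y\<in>B x. g x y) = (\<Sum>z\<in>Sigma A B. g (fst z) (snd z))" for g :: "_ \<Rightarrow> _ \<Rightarrow> 'z::comm_monoid_add"
    using assms by (simp add: sum.Sigma split_def)
  have "(\<Sum>x\<in>A. \<Sum>y\<in>B x. \<Sum>u\<in>A. \<Sum>v\<in>B u. f x y u v)
     = (\<Sum>z\<in>Sigma A B. \<Sum>w\<in>Sigma A B. f (fst z) (snd z) (fst w) (snd w))" by (simp add: h)
  also have "\<dots> = (\<Sum>w\<in>Sigma A B. \<Sum>z\<in>Sigma A B. f (fst z) (snd z) (fst w) (snd w))" by (rule sum.swap)
  also have "\<dots> = (\<Sum>u\<in>A. \<Sum>v\<in>B u. \<Sum>x\<in>A. \<Sum>y\<in>B x. f x y u v)" by (simp add: h)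
  finally show ?thesis .
qed

lemma cancel: "\<Phi> \<in> FC \<Longrightarrow> X \<in> Ob \<Longrightarrow> Y \<in> Ob \<Longrightarrow> Z \<in> Ob \<Longrightarrow>
  signed (ti X Z) (GG \<Phi> Y j X Z m k) + signed (k + m) (GG \<Phi> Y j X Z m k) = 0"
proof (cases "CC X Z (k - m + int (dim X)) = 0")
  case True
  assume P: "\<Phi> \<in> FC" and X: "X \<in> Ob" and Y: "Y \<in> Ob" and Z: "Z \<in> Ob"
  then show ?thesis using True by (simp add: GG_def FC_in)
next
  case False
  assume P: "\<Phi> \<in> FC" and X: "X \<in> Ob" and Y: "Y \<in> Ob" and Z: "Z \<in> Ob"
  from CC_cong[OF X Z False] have "2 * int N dvd (k - m + int (dim X)) - (int (dim X) + ti X Z - 1)"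
    by (simp add: cong_iff_dvd_diff)
  then have "2 dvd (k - m + int (dim X)) - (int (dim X) + ti X Z - 1)"
    using dvd_mult_left by blast
  then have "even (ti X Z) \<longleftrightarrow> odd (k + m)" by presburger
  then show ?thesis by (auto simp: signed_def)
qed

lemma DD: "\<Phi> \<in> FC \<Longrightarrow> D (D \<Phi>) = (\<lambda>Y j. 0)"
proof (intro ext)
  fix Y j assume P: "\<Phi> \<in> FC"
  show "D (D \<Phi>) Y j = 0"
  proof (cases "Y \<in> Ob")
    case False
    then show ?thesis by (simp add: D_out)
  next
    case Y: True
    have m1: "bd Y (j + 1 + 1) (\<Phi> Y (j + 1 + 1)) \<in> Ch Y (j + 1)" by (rule bd_in[OF FC_in[OF P Y]])
    have m2: "T \<Phi> Y (j + 1) \<in> Ch Y (j + 1)" by (rule T_in[OF P Y])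
    have dq: "D \<Phi> Y (j + 1) = bd Y (j + 1 + 1) (\<Phi> Y (j + 1 + 1)) + T \<Phi> Y (j + 1)" by (rule D_eq[OF Y])
    have "bd Y (j + 1) (D \<Phi> Y (j + 1)) = bd Y (j + 1) (bd Y (j + 1 + 1) (\<Phi> Y (j + 1 + 1))) + bd Y (j + 1) (T \<Phi> Y (j + 1))"
      unfolding dq by (rule bd_add[OF m1 m2])
    also have "bd Y (j + 1) (bd Y (j + 1 + 1) (\<Phi> Y (j + 1 + 1))) = 0" by (rule bd_bd[OF FC_in[OF P Y]])
    finally have "bd Y (j + 1) (D \<Phi> Y (j + 1)) = bd Y (j + 1) (T \<Phi> Y (j + 1))" by simp
    then have e: "D (D \<Phi>) Y j = bd Y (j + 1) (T \<Phi> Y (j + 1)) + T (D \<Phi>) Y j"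
      using Y by (simp add: D_eq)
    define LB where "LB = (\<Sum>X\<in>Ob. \<Sum>k\<in>{0..int (dim X)}. signed k (signed (k + int (dim X)) (fp X Y k (j + 1 - k + int (dim X) - 1) (\<Phi> X k) (bd (prd X Y) (j + 1 - k + int (dim X)) (CC X Y (j + 1 - k + int (dim X)))))))"
    define TC where "TC = (\<Sum>X\<in>Ob. \<Sum>k\<in>{0..int (dim X)}. signed k (fp X Y k (j - k + int (dim X)) (T \<Phi> X k) (CC X Y (j - k + int (dim X)))))"
    have LB: "LB = (\<Sum>X\<in>Ob. \<Sum>m\<in>{0..int (dim X)}. \<Sum>Z\<in>Ob. \<Sum>k\<in>{0..int (dim Z)}. signed (ti X Z) (GG \<Phi> Y j X Z m k))"
      unfolding LB_def
      apply (rule sum.cong[OF refl])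
      apply (rule sum.cong[OF refl])
      apply (rule LB_term[OF P _ Y])
      by simp
    have TC: "TC = (\<Sum>X\<in>Ob. \<Sum>m\<in>{0..int (dim X)}. \<Sum>Z\<in>Ob. \<Sum>k\<in>{0..int (dim Z)}. signed (k + m) (GG \<Phi> Y j X Z m k))"
      unfolding TC_def TC_eq[OF P Y]
      by (rule swap4) auto
    have "LB + TC = 0"
      unfolding LB TC sum.distrib[symmetric]
      using cancel[OF P _ Y] by (simp add: sum.neutral)
    moreover note LA_TA[OF P Y, of j]
    ultimately show ?thesis
      unfolding e bdT[OF P Y] TD[OF P Y] LB_def[symmetric] TC_def[symmetric]
      by (simp add: algebra_simps)
  qed
qed

end

theorem proposition4p8:
  fixes Ch :: "'s \<Rightarrow> int \<Rightarrow> 'c::ab_group_add set"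
    and dim :: "'s \<Rightarrow> nat" and prd :: "'s \<Rightarrow> 's \<Rightarrow> 's"
    and bd :: "'s \<Rightarrow> int \<Rightarrow> 'c \<Rightarrow> 'c"
    and fp :: "'s \<Rightarrow> 's \<Rightarrow> int \<Rightarrow> int \<Rightarrow> 'c \<Rightarrow> 'c \<Rightarrow> 'c"
    and fpp :: "'s \<Rightarrow> 's \<Rightarrow> 's \<Rightarrow> int \<Rightarrow> int \<Rightarrow> 'c \<Rightarrow> 'c \<Rightarrow> 'c"
    and N :: nat and Ob :: "'s set" and ti :: "'s \<Rightarrow> 's \<Rightarrow> int"
    and CC :: "'s \<Rightarrow> 's \<Rightarrow> int \<Rightarrow> 'c"
  assumes "geometric_chain_model Ch dim prd bd fp fpp"
    and "finitely_graded_flow_category Ch dim prd bd fpp N Ob ti CC"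
  shows "(\<forall>\<Phi>\<in>flow_complex Ch Ob.
            flow_differential dim bd fp Ob CC \<Phi> \<in> flow_complex Ch Ob)
       \<and> (\<forall>\<Phi>\<in>flow_complex Ch Ob. \<forall>\<Psi>\<in>flow_complex Ch Ob.
            flow_differential dim bd fp Ob CC (\<lambda>X k. \<Phi> X k + \<Psi> X k) =
            (\<lambda>Y j. flow_differential dim bd fp Ob CC \<Phi> Y j + flow_differential dim bd fp Ob CC \<Psi> Y j))
       \<and> (\<forall>X\<in>Ob. \<forall>k. \<forall>\<phi>\<in>Ch X k. \<forall>Y\<in>Ob. \<forall>j.
            flow_differential dim bd fp Ob CC (single_chain X k \<phi>) Y j \<noteq> 0 \<longrightarrow>
            [k - j + ti X Y = 1] (mod (2 * int N)))
       \<and> (\<forall>\<Phi>\<in>flow_complex Ch Ob.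
            flow_differential dim bd fp Ob CC (flow_differential dim bd fp Ob CC \<Phi>) = (\<lambda>Y j. 0))"
proof -
  interpret fgfc Ch dim prd bd fp fpp N Ob ti CC
    using assms by (simp add: fgfc_def gcm_def fgfc_axioms_def)
  have c1: "\<forall>\<Phi>\<in>flow_complex Ch Ob. flow_differential dim bd fp Ob CC \<Phi> \<in> flow_complex Ch Ob"
    using D_FC by blast
  have c2: "\<forall>\<Phi>\<in>flow_complex Ch Ob. \<forall>\<Psi>\<in>flow_complex Ch Ob.
            flow_differential dim bd fp Ob CC (\<lambda>X k. \<Phi> X k + \<Psi> X k) =
            (\<lambda>Y j. flow_differential dim bd fp Ob CC \<Phi> Y j + flow_differential dim bd fp Ob CC \<Psi> Y j)"
    using D_add by blast
  have c3: "\<forall>X\<in>Ob. \<forall>k. \<forall>\<phi>\<in>Ch X k. \<forall>Y\<in>Ob. \<forall>j.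
            flow_differential dim bd fp Ob CC (single_chain X k \<phi>) Y j \<noteq> 0 \<longrightarrow>
            [k - j + ti X Y = 1] (mod (2 * int N))"
    using D_grading by blast
  have c4: "\<forall>\<Phi>\<in>flow_complex Ch Ob.
            flow_differential dim bd fp Ob CC (flow_differential dim bd fp Ob CC \<Phi>) = (\<lambda>Y j. 0)"
    using DD by blast
  show ?thesis using c1 c2 c3 c4 by blast
qed

end
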